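(* Let $\tau\in\mathcal A_n$ be a permutation that is not simple. Then there exist $m$ with $2\le m\le n-1$, a simple permutation $\pi\in\mathcal A_m$, and $\sigma\in\mathcal A_{n-m+1}$ such that $\tau=\pi[\sigma]$; moreover the simple permutation $\pi$ is uniquely determined by $\tau$.
   Context: $\mathcal A_{n}$ is the set of permutations $w\in S_{n}$ (one-line notation $w_1\cdots w_n$) avoiding all six vincular patterns below, where $w$ contains - $\underline{32}\,\underline{41}$ if there are $i,j$ with $i+2\le j\le n-1$ and $w_{j+1}<w_{i+1}<w_i<w_j$; - $\underline{14}\,\underline{23}$ if there are such $i,j$ with $w_i<w_j<w_{j+1}<w_{i+1}$; - $\underline{41}\,\underline{32}$ if there are such $i,j$ with $w_{i+1}<w_{j+1}<w_j<w_i$; - $\underline{23}\,\underline{14}$ if there are such $i,j$ with $w_j<w_i<w_{i+1}<w_{j+1}$; - $\underline{23}\,\underline{1}$ if there is $i$ with $i+1\le n-1$ and $w_n<w_i<w_{i+1}$; - $\underline{1}\,\underline{32}$ if there is $j$ with $2\le j\le n-1$ and $w_1<w_{j+1}<w_j$. A permutation $\pi\in S_n$ is simple if there is no interval of positions $\{i,i+1,\dots,j\}$ with $2\le j-i+1\le n-1$ such that $\{\pi_i,\dots,\pi_j\}$ is a set of consecutive integers (so every permutation of length $\le2$ is simple). Inflation at $1$: for $\pi\in S_n$ with $\pi_r=1$ and $\sigma\in S_m$, $\pi[\sigma]=(\pi_1+m-1)\cdots(\pi_{r-1}+m-1)\,\sigma_1\cdots\sigma_m\,(\pi_{r+1}+m-1)\cdots(\pi_n+m-1)\in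 S_{n+m-1}$. *)

theory Defs
  imports Main
begin

text \<open>Permutations of length n in one-line notation, as lists of values 1..n.
  Positions are 1-based: the entry w_i is  pe w i = w ! (i - 1).\<close>

definition Sn :: "nat \<Rightarrow> nat list set" where
  "Sn n = {w. length w = n \<and> distinct w \<and> set w = {1..n}}"

definition pe :: "nat list \<Rightarrow> nat \<Rightarrow> nat" where
  "pe w i = w ! (i - 1)"

definition contains_3241 :: "nat list \<Rightarrow> bool" where
  "contains_3241 w \<longleftrightarrow> (\<exists>i j. 1 \<le> i \<and> i + 2 \<le> j \<and> j \<le> length w - 1 \<and>
     pe w (j+1) < pe w (i+1) \<and> pe w (i+1) < pe w i \<and> pe w i < pe w j)"

definition contains_1423 :: "nat list \<Rightarrow> bool" where
  "contains_1423 w \<longleftrightarrow> (\<exists>i j. 1 \<le> i \<and> i + 2 \<le> j \<and> j \<le> length w - 1 \<and>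
     pe w i < pe w j \<and> pe w j < pe w (j+1) \<and> pe w (j+1) < pe w (i+1))"

definition contains_4132 :: "nat list \<Rightarrow> bool" where
  "contains_4132 w \<longleftrightarrow> (\<exists>i j. 1 \<le> i \<and> i + 2 \<le> j \<and> j \<le> length w - 1 \<and>
     pe w (i+1) < pe w (j+1) \<and> pe w (j+1) < pe w j \<and> pe w j < pe w i)"

definition contains_2314 :: "nat list \<Rightarrow> bool" where
  "contains_2314 w \<longleftrightarrow> (\<exists>i j. 1 \<le> i \<and> i + 2 \<le> j \<and> j \<le> length w - 1 \<and>
     pe w j < pe w i \<and> pe w i < pe w (i+1) \<and> pe w (i+1) < pe w (j+1))"

definition contains_231 :: "nat list \<Rightarrow> bool" where
  "contains_231 w \<longleftrightarrow> (\<exists>i. 1 \<le> i \<and> i + 1 \<le> length w - 1 \<and>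
     pe w (length w) < pe w i \<and> pe w i < pe w (i+1))"

definition contains_132 :: "nat list \<Rightarrow> bool" where
  "contains_132 w \<longleftrightarrow> (\<exists>j. 2 \<le> j \<and> j \<le> length w - 1 \<and>
     pe w 1 < pe w (j+1) \<and> pe w (j+1) < pe w j)"

definition An :: "nat \<Rightarrow> nat list set" where
  "An n = {w \<in> Sn n. \<not> contains_3241 w \<and> \<not> contains_1423 w \<and> \<not> contains_4132 w \<and>
      \<not> contains_2314 w \<and> \<not> contains_231 w \<and> \<not> contains_132 w}"

definition simple :: "nat list \<Rightarrow> bool" where
  "simple w \<longleftrightarrow> \<not> (\<exists>i j. 1 \<le> i \<and> i \<le> j \<and> j \<le> length w \<and>
      2 \<le> j - i + 1 \<and> j - i + 1 \<le> length w - 1 \<and>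
      (\<exists>a. pe w ` {i..j} = {a..<a + (j - i + 1)}))"

definition inflate :: "nat list \<Rightarrow> nat list \<Rightarrow> nat list" where
  "inflate \<pi> \<sigma> =
     map (\<lambda>x. x + length \<sigma> - 1) (takeWhile (\<lambda>x. x \<noteq> 1) \<pi>) @ \<sigma> @
     map (\<lambda>x. x + length \<sigma> - 1) (tl (dropWhile (\<lambda>x. x \<noteq> 1) \<pi>))"

end

theory Submission
  imports Defs
begin


lemma Sn_len: "w \<in> Sn n \<Longrightarrow> length w = n" by (simp add: Sn_def)

lemma Sn_range: assumes "w \<in> Sn n" "1 \<le> i" "i \<le> n" shows "pe w i \<in> {1..n}"
proof -
  have "length w = n" using assms by (simp add: Sn_def)
  hence "w ! (i-1) \<in> set w" using assms by (intro nth_mem) simp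
  moreover have "set w = {1..n}" using assms by (simp add: Sn_def)
  ultimately show ?thesis by (simp add: pe_def)
qed

lemma Sn_inj: assumes "w \<in> Sn n" "1 \<le> i" "i \<le> n" "1 \<le> j" "j \<le> n" "pe w i = pe w j" shows "i = j"
proof -
  have "distinct w" "length w = n" using assms by (auto simp: Sn_def)
  hence "i - 1 = j - 1" using assms by (simp add: pe_def nth_eq_iff_index_eq)
  thus ?thesis using assms by simp
qed

lemma Sn_surj: assumes "w \<in> Sn n" "1 \<le> v" "v \<le> n" obtains i where "1 \<le> i" "i \<le> n" "pe w i = v"
proof -
  have "v \<in> set w" using assms by (auto simp: Sn_def)
  then obtain k where "k < length w" "w ! k = v" by (auto simp: in_set_conv_nth)
  thus ?thesis using that[of "k+1"] assms by (auto simp: Sn_def pe_def)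
qed

lemma Sn_pos: "w \<in> Sn n \<Longrightarrow> 1 \<le> i \<Longrightarrow> i \<le> n \<Longrightarrow> 1 \<le> pe w i"
  using Sn_range by fastforce
lemma Sn_le: "w \<in> Sn n \<Longrightarrow> 1 \<le> i \<Longrightarrow> i \<le> n \<Longrightarrow> pe w i \<le> n"
  using Sn_range by fastforce

lemma Sn_intro: assumes "length w = n" "\<And>i. 1 \<le> i \<Longrightarrow> i \<le> n \<Longrightarrow> pe w i \<in> {1..n}"
  "\<And>i j. 1 \<le> i \<Longrightarrow> i \<le> n \<Longrightarrow> 1 \<le> j \<Longrightarrow> j \<le> n \<Longrightarrow> pe w i = pe w j \<Longrightarrow> i = j"
  shows "w \<in> Sn n"
proof -
  have d: "distinct w" unfolding distinct_conv_nth
  proof (intro allI impI)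
    fix i j assume "i < length w" "j < length w" "i \<noteq> j"
    thus "w ! i \<noteq> w ! j" using assms(3)[of "i+1" "j+1"] assms(1) by (auto simp: pe_def)
  qed
  have s: "set w \<subseteq> {1..n}"
  proof
    fix x assume "x \<in> set w"
    then obtain k where "k < length w" "w ! k = x" by (auto simp: in_set_conv_nth)
    thus "x \<in> {1..n}" using assms(2)[of "k+1"] assms(1) by (auto simp: pe_def)
  qed
  have "card (set w) = n" using d assms(1) distinct_card by blast
  hence "set w = {1..n}" using s by (simp add: card_subset_eq)
  thus ?thesis using d assms(1) by (simp add: Sn_def)
qed



definition LB :: "nat list \<Rightarrow> nat \<Rightarrow> nat \<Rightarrow> bool" where
  "LB w k P \<longleftrightarrow> 1 \<le> k \<and> 1 \<le> P \<and> P + k - 1 \<le> length w \<and>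
     (\<forall>t. 1 \<le> t \<and> t \<le> length w \<longrightarrow> (pe w t \<le> k \<longleftrightarrow> P \<le> t \<and> t \<le> P + k - 1))"

definition dec :: "nat list \<Rightarrow> nat \<Rightarrow> nat \<Rightarrow> nat list" where
  "dec w k P = map (\<lambda>x. x - (k - 1)) (take (P - 1) w) @ [1] @ map (\<lambda>x. x - (k - 1)) (drop (P + k - 1) w)"

definition sub :: "nat list \<Rightarrow> nat \<Rightarrow> nat \<Rightarrow> nat list" where
  "sub w k P = take k (drop (P - 1) w)"

lemma set_take_pe: "x \<in> set (take N w) \<Longrightarrow> \<exists>t. 1 \<le> t \<and> t \<le> N \<and> t \<le> length w \<and> x = pe w t"
proof -
  assume "x \<in> set (take N w)"
  then obtain i where "i < length (take N w)" "take N w ! i = x" by (auto simp: in_set_conv_nth)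
  thus ?thesis by (intro exI[of _ "i+1"]) (auto simp: pe_def)
qed

lemma set_drop_pe: "x \<in> set (drop N w) \<Longrightarrow> \<exists>t. N < t \<and> t \<le> length w \<and> x = pe w t"
proof -
  assume "x \<in> set (drop N w)"
  then obtain i where "i < length (drop N w)" "drop N w ! i = x" by (auto simp: in_set_conv_nth)
  thus ?thesis by (intro exI[of _ "N+i+1"]) (auto simp: pe_def)
qed

lemma LB_outside: assumes "LB w k P" "1 \<le> t" "t \<le> length w" "t < P \<or> P + k - 1 < t"
  shows "k < pe w t"
  using assms unfolding LB_def by (meson not_le)

lemma inflate_dec: assumes "LB w k P"
  shows "inflate (dec w k P) (sub w k P) = w"
proof -
  have L: "1 \<le> k" "1 \<le> P" "P + k - 1 \<le> length w" using assms by (auto simp: LB_def)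
  define A where "A = take (P - 1) w"
  define C where "C = drop (P + k - 1) w"
  have gA: "\<And>x. x \<in> set A \<Longrightarrow> k < x"
  proof -
    fix x assume "x \<in> set A"
    then obtain t where "1 \<le> t" "t \<le> P - 1" "t \<le> length w" "x = pe w t" using set_take_pe unfolding A_def by blast
    moreover have "t < P" using \<open>t \<le> P - 1\<close> L by linarith
    ultimately show "k < x" using LB_outside[OF assms, of t] by simp
  qed
  have gC: "\<And>x. x \<in> set C \<Longrightarrow> k < x"
  proof -
    fix x assume "x \<in> set C"
    then obtain t where "P + k - 1 < t" "t \<le> length w" "x = pe w t" using set_drop_pe unfolding C_def by blast
    thus "k < x" using LB_outside[OF assms, of t] L by simp
  qed
  have ne1: "\<And>x. x \<in> set (map (\<lambda>x. x - (k - 1)) A) \<Longrightarrow> x \<noteq> 1"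
  proof -
    fix x assume "x \<in> set (map (\<lambda>x. x - (k - 1)) A)"
    then obtain y where "y \<in> set A" "x = y - (k - 1)" by auto
    thus "x \<noteq> 1" using gA[of y] L(1) by linarith
  qed
  have tw: "takeWhile (\<lambda>x. x \<noteq> 1) (dec w k P) = map (\<lambda>x. x - (k - 1)) A"
    unfolding dec_def A_def[symmetric] C_def[symmetric] 
    apply (subst takeWhile_append2[OF ne1])
    apply (simp only: append_Cons append_Nil takeWhile.simps)
    by simp
  have dw: "tl (dropWhile (\<lambda>x. x \<noteq> 1) (dec w k P)) = map (\<lambda>x. x - (k - 1)) C"
    unfolding dec_def A_def[symmetric] C_def[symmetric] 
    apply (subst dropWhile_append2[OF ne1])
    apply (simp only: append_Cons append_Nil dropWhile.simps)
    by simp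
  have ls: "length (sub w k P) = k" using L by (simp add: sub_def)
  have mA: "map (\<lambda>x. x + length (sub w k P) - 1) (map (\<lambda>x. x - (k - 1)) A) = A"
    unfolding ls map_map
  proof (rule map_idI)
    fix x assume "x \<in> set A" thus "((\<lambda>x. x + k - 1) \<circ> (\<lambda>x. x - (k - 1))) x = x" using gA[of x] L(1) by simp
  qed
  have mC: "map (\<lambda>x. x + length (sub w k P) - 1) (map (\<lambda>x. x - (k - 1)) C) = C"
    unfolding ls map_map
  proof (rule map_idI)
    fix x assume "x \<in> set C" thus "((\<lambda>x. x + k - 1) \<circ> (\<lambda>x. x - (k - 1))) x = x" using gC[of x] L(1) by simp
  qed
  have "inflate (dec w k P) (sub w k P) = A @ sub w k P @ C"
    unfolding inflate_def tw dw mA mC ..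
  also have "\<dots> = w"
  proof -
    have "drop k (drop (P - 1) w) = drop (P + k - 1) w" using L by (simp add: add.commute)
    thus ?thesis unfolding A_def C_def sub_def by (metis append_take_drop_id)
  qed
  finally show ?thesis .
qed



definition phi :: "nat \<Rightarrow> nat \<Rightarrow> nat \<Rightarrow> nat" where
  "phi k P i = (if i < P then i else i + k - 1)"
definition cl :: "nat \<Rightarrow> nat \<Rightarrow> nat \<Rightarrow> nat" where
  "cl k P t = (if t < P then t else if t \<le> P + k - 1 then P else t - (k - 1))"

lemma LB_basic: "LB w k P \<Longrightarrow> 1 \<le> k \<and> 1 \<le> P \<and> P + k - 1 \<le> length w" by (simp add: LB_def)

lemma LB_iff: "LB w k P \<Longrightarrow> 1 \<le> t \<Longrightarrow> t \<le> length w \<Longrightarrow> (pe w t \<le> k \<longleftrightarrow> P \<le> t \<and> t \<le> P + k - 1)"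
  by (simp add: LB_def)

lemma length_dec: "LB w k P \<Longrightarrow> length (dec w k P) = length w - k + 1"
  by (auto simp: dec_def LB_def)

lemma length_sub: "LB w k P \<Longrightarrow> length (sub w k P) = k"
  by (auto simp: sub_def LB_def)

lemma pe_dec: assumes "LB w k P" "1 \<le> i" "i \<le> length w - k + 1"
  shows "pe (dec w k P) i = (if i = P then 1 else pe w (phi k P i) - (k - 1))"
proof -
  have L: "1 \<le> k" "1 \<le> P" "P + k - 1 \<le> length w" using assms LB_basic by auto
  have lA: "length (map (\<lambda>x. x - (k - 1)) (take (P - 1) w)) = P - 1" using L by simp
  show ?thesis
  proof (cases "i < P")
    case True
    thus ?thesis unfolding pe_def dec_def using L assms by (simp add: nth_append phi_def)
  next
    case False
    show ?thesis
    proof (cases "i = P")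
      case True thus ?thesis unfolding pe_def dec_def using L assms by (simp add: nth_append)
    next
      case False
      hence "P < i" using \<open>\<not> i < P\<close> by simp
      have "(map (\<lambda>x. x - (k - 1)) (take (P - 1) w) @ [1] @ map (\<lambda>x. x - (k - 1)) (drop (P + k - 1) w)) ! (i - 1)
           = ([1] @ map (\<lambda>x. x - (k - 1)) (drop (P + k - 1) w)) ! (i - 1 - (P - 1))"
        using L \<open>P < i\<close> lA by (simp add: nth_append_right)
      also have "i - 1 - (P - 1) = Suc (i - 1 - P)" using L \<open>P < i\<close> by simp
      also have "([1] @ map (\<lambda>x. x - (k - 1)) (drop (P + k - 1) w)) ! Suc (i - 1 - P)
           = (map (\<lambda>x. x - (k - 1)) (drop (P + k - 1) w)) ! (i - 1 - P)" by simp
      also have "\<dots> = w ! (P + k - 1 + (i - 1 - P)) - (k - 1)" using L assms \<open>P < i\<close> by simp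
      also have "P + k - 1 + (i - 1 - P) = i + k - 1 - 1" using L \<open>P < i\<close> by simp
      finally show ?thesis unfolding pe_def dec_def phi_def using \<open>P < i\<close> by simp
    qed
  qed
qed

lemma pe_sub: assumes "LB w k P" "1 \<le> s" "s \<le> k"
  shows "pe (sub w k P) s = pe w (s + P - 1)"
proof -
  have L: "1 \<le> k" "1 \<le> P" "P + k - 1 \<le> length w" using assms LB_basic by auto
  thus ?thesis using assms unfolding pe_def sub_def by (simp add: add.commute)
qed

lemma cl_phi: assumes "1 \<le> k" shows "cl k P (phi k P i) = i"
  using assms unfolding cl_def phi_def by auto

lemma val_dec: assumes "w \<in> Sn n" "LB w k P" "1 \<le> t" "t \<le> n"
  shows "pe (dec w k P) (cl k P t) = (if pe w t \<le> k then 1 else pe w t - (k - 1))"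
    and "1 \<le> cl k P t" "cl k P t \<le> n - k + 1"
proof -
  have ln: "length w = n" using assms Sn_len by auto
  have L: "1 \<le> k" "1 \<le> P" "P + k - 1 \<le> n" using assms LB_basic ln by auto
  have iff: "pe w t \<le> k \<longleftrightarrow> P \<le> t \<and> t \<le> P + k - 1" using LB_iff[OF assms(2)] assms ln by simp
  show r: "1 \<le> cl k P t" "cl k P t \<le> n - k + 1" using L assms unfolding cl_def by auto
  show "pe (dec w k P) (cl k P t) = (if pe w t \<le> k then 1 else pe w t - (k - 1))"
  proof (cases "t < P")
    case True thus ?thesis using pe_dec[OF assms(2), of t] iff r ln unfolding cl_def phi_def by auto
  next
    case False
    show ?thesis
    proof (cases "t \<le> P + k - 1")
      case True thus ?thesis using pe_dec[OF assms(2), of P] iff r ln False L unfolding cl_def by auto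
    next
      case F2: False
      have "phi k P (t - (k - 1)) = t" using F2 L unfolding phi_def by auto
      moreover have "t - (k - 1) \<noteq> P" using F2 L by auto
      ultimately show ?thesis using pe_dec[OF assms(2), of "t - (k - 1)"] iff r ln False F2 L unfolding cl_def by auto
    qed
  qed
qed

lemma phi_range: assumes "1 \<le> k" "1 \<le> i" "i \<le> n - k + 1" "k \<le> n" shows "1 \<le> phi k P i" "phi k P i \<le> n"
  using assms unfolding phi_def by auto

lemma dec_Sn: assumes "w \<in> Sn n" "LB w k P"
  shows "dec w k P \<in> Sn (n - k + 1)"
proof -
  have ln: "length w = n" using assms Sn_len by auto
  have L: "1 \<le> k" "1 \<le> P" "P + k - 1 \<le> n" using assms LB_basic ln by auto
  have V: "\<And>i. 1 \<le> i \<Longrightarrow> i \<le> n - k + 1 \<Longrightarrow> pe (dec w k P) i = (if pe w (phi k P i) \<le> k then 1 else pe w (phi k P i) - (k - 1))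
      \<and> 1 \<le> phi k P i \<and> phi k P i \<le> n"
  proof -
    fix i assume i: "1 \<le> i" "i \<le> n - k + 1"
    have pr: "1 \<le> phi k P i" "phi k P i \<le> n" using phi_range[OF L(1) i] L by auto
    show "?thesis i" using val_dec(1)[OF assms pr] cl_phi[OF L(1)] pr by simp
  qed
  show ?thesis
  proof (rule Sn_intro)
    show "length (dec w k P) = n - k + 1" using length_dec[OF assms(2)] ln by simp
  next
    fix i assume i: "1 \<le> i" "i \<le> n - k + 1"
    have "pe w (phi k P i) \<in> {1..n}" using Sn_range[OF assms(1)] V[OF i] by auto
    thus "pe (dec w k P) i \<in> {1..n - k + 1}" using V[OF i] L by auto
  next
    fix i j assume i: "1 \<le> i" "i \<le> n - k + 1" and j: "1 \<le> j" "j \<le> n - k + 1" and e: "pe (dec w k P) i = pe (dec w k P) j"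
    have "phi k P i = phi k P j"
    proof (cases "pe w (phi k P i) \<le> k")
      case True
      have d1: "pe (dec w k P) j = 1" using e V[OF i] True by simp
      have "pe w (phi k P j) \<le> k"
      proof (rule ccontr)
        assume a: "\<not> pe w (phi k P j) \<le> k"
        hence "pe (dec w k P) j = pe w (phi k P j) - (k - 1)" using V[OF j] by simp
        thus False using a d1 L by linarith
      qed
      hence "pe w (phi k P j) \<le> k" by simp
      have "P \<le> phi k P i \<and> phi k P i \<le> P + k - 1" using True LB_iff[OF assms(2)] V[OF i] ln by auto
      moreover have "P \<le> phi k P j \<and> phi k P j \<le> P + k - 1" using \<open>pe w (phi k P j) \<le> k\<close> LB_iff[OF assms(2)] V[OF j] ln by auto
      ultimately have "i = P" "j = P" using L unfolding phi_def by (auto split: if_splits)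
      thus ?thesis by simp
    next
      case False
      have "\<not> pe w (phi k P j) \<le> k"
      proof
        assume "pe w (phi k P j) \<le> k"
        hence "pe (dec w k P) j = 1" using V[OF j] by simp
        moreover have "pe (dec w k P) i \<noteq> 1" using V[OF i] False L by auto
        ultimately show False using e by simp
      qed
      hence "pe w (phi k P i) = pe w (phi k P j)" using e V[OF i] V[OF j] False by auto
      thus ?thesis using Sn_inj[OF assms(1)] V[OF i] V[OF j] by blast
    qed
    hence "cl k P (phi k P i) = cl k P (phi k P j)" by simp
    thus "i = j" using cl_phi[OF L(1)] by simp
  qed
qed

lemma sub_Sn: assumes "w \<in> Sn n" "LB w k P"
  shows "sub w k P \<in> Sn k"
proof -
  have ln: "length w = n" using assms Sn_len by auto
  have L: "1 \<le> k" "1 \<le> P" "P + k - 1 \<le> n" using assms LB_basic ln by auto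
  show ?thesis
  proof (rule Sn_intro)
    show "length (sub w k P) = k" using length_sub[OF assms(2)] .
  next
    fix s assume s: "1 \<le> s" "s \<le> k"
    have r: "1 \<le> s + P - 1" "s + P - 1 \<le> n" using s L by auto
    have "pe w (s + P - 1) \<le> k" using LB_iff[OF assms(2)] r ln s by auto
    thus "pe (sub w k P) s \<in> {1..k}" using pe_sub[OF assms(2) s] Sn_pos[OF assms(1) r] by auto
  next
    fix i j assume i: "1 \<le> i" "i \<le> k" and j: "1 \<le> j" "j \<le> k" and e: "pe (sub w k P) i = pe (sub w k P) j"
    have "pe w (i + P - 1) = pe w (j + P - 1)" using e pe_sub[OF assms(2)] i j by simp
    hence "i + P - 1 = j + P - 1" using Sn_inj[OF assms(1)] i j L by simp
    thus "i = j" using L by simp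
  qed
qed



lemma inflate_LB: assumes "\<pi> \<in> Sn m" "\<sigma> \<in> Sn k" "1 \<le> m" "1 \<le> k"
  shows "\<exists>P. LB (inflate \<pi> \<sigma>) k P \<and> \<pi> = dec (inflate \<pi> \<sigma>) k P \<and> \<sigma> = sub (inflate \<pi> \<sigma>) k P
     \<and> length (inflate \<pi> \<sigma>) = m + k - 1"
proof -
  have sp: "set \<pi> = {1..m}" "distinct \<pi>" "length \<pi> = m" using assms(1) by (auto simp: Sn_def)
  have ss: "set \<sigma> = {1..k}" "length \<sigma> = k" using assms(2) by (auto simp: Sn_def)
  have one: "1 \<in> set \<pi>" using sp assms(3) by auto
  define A where "A = takeWhile (\<lambda>x. x \<noteq> 1) \<pi>"
  define D where "D = dropWhile (\<lambda>x. x \<noteq> 1) \<pi>"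
  have Dne: "D \<noteq> []" unfolding D_def using one by simp
  have hD: "hd D = 1" using hd_dropWhile[OF Dne[unfolded D_def]] unfolding D_def by simp
  define C where "C = tl D"
  have D: "D = 1 # C" using Dne hD unfolding C_def by (cases D) auto
  have pi: "\<pi> = A @ 1 # C" using D unfolding A_def D_def by (metis takeWhile_dropWhile_id)
  have Ane: "\<And>x. x \<in> set A \<Longrightarrow> x \<noteq> 1" unfolding A_def by (auto dest: set_takeWhileD)
  have Cne: "\<And>x. x \<in> set C \<Longrightarrow> x \<noteq> 1" using sp(2) pi by auto
  have A2: "\<And>x. x \<in> set A \<Longrightarrow> 2 \<le> x"
  proof -
    fix x assume x: "x \<in> set A"
    hence "x \<in> set \<pi>" using pi by simp
    hence "1 \<le> x" using sp(1) by simp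
    thus "2 \<le> x" using Ane[OF x] by simp
  qed
  have C2: "\<And>x. x \<in> set C \<Longrightarrow> 2 \<le> x"
  proof -
    fix x assume x: "x \<in> set C"
    hence "x \<in> set \<pi>" using pi by simp
    hence "1 \<le> x" using sp(1) by simp
    thus "2 \<le> x" using Cne[OF x] by simp
  qed
  define f where "f = (\<lambda>x::nat. x + k - 1)"
  have tau: "inflate \<pi> \<sigma> = map f A @ \<sigma> @ map f C"
    unfolding inflate_def f_def ss(2) A_def[symmetric] D_def[symmetric] C_def[symmetric] ..
  define P where "P = length A + 1"
  have lt: "length (inflate \<pi> \<sigma>) = m + k - 1" using tau sp(3) pi ss(2) assms by simp
  have gf: "\<And>xs. map (\<lambda>x. x - (k - 1)) (map f xs) = xs" unfolding f_def using assms(4)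
    by (induct_tac xs) auto
  have tk: "take (P - 1) (inflate \<pi> \<sigma>) = map f A" unfolding tau P_def by simp
  have dr: "drop (P + k - 1) (inflate \<pi> \<sigma>) = map f C" unfolding tau P_def using ss(2) by simp
  have sb: "sub (inflate \<pi> \<sigma>) k P = \<sigma>" unfolding sub_def tau P_def using ss(2) by simp
  have dc: "dec (inflate \<pi> \<sigma>) k P = \<pi>" unfolding dec_def tk dr gf using pi by simp
  have lb: "LB (inflate \<pi> \<sigma>) k P"
    unfolding LB_def
  proof (intro conjI allI impI)
    show "1 \<le> k" "1 \<le> P" using assms P_def by auto
    show "P + k - 1 \<le> length (inflate \<pi> \<sigma>)" unfolding tau P_def using ss(2) by simp
  next
    fix t assume t: "1 \<le> t \<and> t \<le> length (inflate \<pi> \<sigma>)"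
    have pt: "pe (inflate \<pi> \<sigma>) t = (map f A @ \<sigma> @ map f C) ! (t - 1)" unfolding pe_def tau ..
    show "pe (inflate \<pi> \<sigma>) t \<le> k \<longleftrightarrow> P \<le> t \<and> t \<le> P + k - 1"
    proof (cases "t - 1 < length A")
      case True
      hence "pe (inflate \<pi> \<sigma>) t = f (A ! (t - 1))" unfolding pt by (simp add: nth_append)
      moreover have "2 \<le> A ! (t - 1)" using A2 True by simp
      ultimately show ?thesis using True unfolding f_def P_def by auto
    next
      case False
      show ?thesis
      proof (cases "t - 1 - length A < k")
        case True
        hence "pe (inflate \<pi> \<sigma>) t = \<sigma> ! (t - 1 - length A)" unfolding pt using False ss(2) by (simp add: nth_append)
        moreover have "\<sigma> ! (t - 1 - length A) \<in> set \<sigma>" using True ss(2) by simp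
        ultimately show ?thesis using True False ss(1) t unfolding P_def by auto
      next
        case F2: False
        have "t - 1 - length A - k < length C" using t F2 False lt tau ss(2) by (simp, arith)
        hence "pe (inflate \<pi> \<sigma>) t = f (C ! (t - 1 - length A - k))" unfolding pt using False F2 ss(2) by (simp add: nth_append)
        moreover have "2 \<le> C ! (t - 1 - length A - k)" using C2 \<open>t - 1 - length A - k < length C\<close> by simp
        ultimately show ?thesis using False F2 unfolding f_def P_def by auto
      qed
    qed
  qed
  show ?thesis using lb dc sb lt by auto
qed



lemma dec_mono: assumes "w \<in> Sn n" "LB w k P" "1 \<le> t" "t \<le> n" "1 \<le> t'" "t' \<le> n"
  "pe (dec w k P) (cl k P t) < pe (dec w k P) (cl k P t')"
  shows "pe w t < pe w t'"
proof -
  have k: "1 \<le> k" using assms LB_basic by auto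
  note v1 = val_dec(1)[OF assms(1,2,3,4)] and v2 = val_dec(1)[OF assms(1,2,5,6)]
  show ?thesis
  proof (cases "pe w t \<le> k")
    case True
    show ?thesis
    proof (cases "pe w t' \<le> k")
      case True thus ?thesis using assms(7) v1 v2 \<open>pe w t \<le> k\<close> by simp
    next
      case False thus ?thesis using True by simp
    qed
  next
    case False
    show ?thesis
    proof (cases "pe w t' \<le> k")
      case True thus ?thesis using assms(7) v1 v2 False k by simp
    next
      case F2: False thus ?thesis using assms(7) v1 v2 False k by simp
    qed
  qed
qed

lemma phi_pair: assumes "1 \<le> k" "1 \<le> P" "P + k - 1 \<le> n" "1 \<le> i" "i + 1 \<le> n - k + 1"
  shows "cl k P (phi k P i) = i" "cl k P (phi k P i + 1) = i + 1" "1 \<le> phi k P i" "phi k P i + 1 \<le> n"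
  using assms unfolding cl_def phi_def by auto

lemma phi_gap: assumes "1 \<le> k" "i + 2 \<le> j" shows "phi k P i + 2 \<le> phi k P j"
  using assms unfolding phi_def by auto

lemma cl_one: assumes "1 \<le> k" "1 \<le> P" shows "cl k P 1 = 1"
  using assms unfolding cl_def by auto

lemma cl_last: assumes "1 \<le> k" "1 \<le> P" "P + k - 1 \<le> n" shows "cl k P n = n - k + 1"
  using assms unfolding cl_def by auto

lemma dec_An: assumes "w \<in> An n" "LB w k P"
  shows "dec w k P \<in> An (n - k + 1)"
proof -
  have wS: "w \<in> Sn n" using assms by (simp add: An_def)
  have ln: "length w = n" using wS Sn_len by auto
  have L: "1 \<le> k" "1 \<le> P" "P + k - 1 \<le> n" using assms(2) LB_basic ln by auto
  define \<pi> where "\<pi> = dec w k P"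
  define m where "m = n - k + 1"
  have pS: "\<pi> \<in> Sn m" using dec_Sn[OF wS assms(2)] unfolding \<pi>_def m_def .
  have lp: "length \<pi> = m" using pS Sn_len by auto
  have mono: "\<And>t t'. 1 \<le> t \<Longrightarrow> t \<le> n \<Longrightarrow> 1 \<le> t' \<Longrightarrow> t' \<le> n \<Longrightarrow> pe \<pi> (cl k P t) < pe \<pi> (cl k P t') \<Longrightarrow> pe w t < pe w t'"
    using dec_mono[OF wS assms(2)] unfolding \<pi>_def by blast
  have pair: "\<And>i. 1 \<le> i \<Longrightarrow> i \<le> m - 1 \<Longrightarrow> cl k P (phi k P i) = i \<and> cl k P (phi k P i + 1) = i + 1 \<and> 1 \<le> phi k P i \<and> phi k P i + 1 \<le> n"
  proof -
    fix i assume i: "1 \<le> i" "i \<le> m - 1"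
    have "i + 1 \<le> n - k + 1" using i unfolding m_def by arith
    thus "?thesis i" using phi_pair[OF L i(1)] by blast
  qed
  have gap: "\<And>i j. i + 2 \<le> j \<Longrightarrow> phi k P i + 2 \<le> phi k P j" using phi_gap[OF L(1)] by blast
  have jb: "\<And>j. 1 \<le> j \<Longrightarrow> j \<le> m - 1 \<Longrightarrow> phi k P j \<le> n - 1" using pair by fastforce
  note defs = contains_3241_def contains_1423_def contains_4132_def contains_2314_def contains_231_def contains_132_def
  have c1: "\<not> contains_3241 \<pi>"
  proof
    assume "contains_3241 \<pi>"
    then obtain i j where ij: "1 \<le> i" "i + 2 \<le> j" "j \<le> m - 1"
      "pe \<pi> (j+1) < pe \<pi> (i+1)" "pe \<pi> (i+1) < pe \<pi> i" "pe \<pi> i < pe \<pi> j" unfolding contains_3241_def lp by blast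
    have pi: "cl k P (phi k P i) = i \<and> cl k P (phi k P i + 1) = i + 1 \<and> 1 \<le> phi k P i \<and> phi k P i + 1 \<le> n" using pair ij by simp
    have pj: "cl k P (phi k P j) = j \<and> cl k P (phi k P j + 1) = j + 1 \<and> 1 \<le> phi k P j \<and> phi k P j + 1 \<le> n" using pair ij by simp
    have m0: "pe w (phi k P j + 1) < pe w (phi k P i + 1)" by (rule mono) (use pi pj ij L in auto)
    have m1: "pe w (phi k P i + 1) < pe w (phi k P i)" by (rule mono) (use pi pj ij L in auto)
    have m2: "pe w (phi k P i) < pe w (phi k P j)" by (rule mono) (use pi pj ij L in auto)
    have "contains_3241 w" unfolding contains_3241_def ln
      apply (rule exI[of _ "phi k P i"], rule exI[of _ "phi k P j"])
      using pi pj gap[OF ij(2)] jb[of j] ij    m0 m1 m2 by auto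
    thus False using assms(1) by (simp add: An_def)
  qed
  have c2: "\<not> contains_1423 \<pi>"
  proof
    assume "contains_1423 \<pi>"
    then obtain i j where ij: "1 \<le> i" "i + 2 \<le> j" "j \<le> m - 1"
      "pe \<pi> i < pe \<pi> j" "pe \<pi> j < pe \<pi> (j+1)" "pe \<pi> (j+1) < pe \<pi> (i+1)" unfolding contains_1423_def lp by blast
    have pi: "cl k P (phi k P i) = i \<and> cl k P (phi k P i + 1) = i + 1 \<and> 1 \<le> phi k P i \<and> phi k P i + 1 \<le> n" using pair ij by simp
    have pj: "cl k P (phi k P j) = j \<and> cl k P (phi k P j + 1) = j + 1 \<and> 1 \<le> phi k P j \<and> phi k P j + 1 \<le> n" using pair ij by simp
    have m0: "pe w (phi k P i) < pe w (phi k P j)" by (rule mono) (use pi pj ij L in auto)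
    have m1: "pe w (phi k P j) < pe w (phi k P j + 1)" by (rule mono) (use pi pj ij L in auto)
    have m2: "pe w (phi k P j + 1) < pe w (phi k P i + 1)" by (rule mono) (use pi pj ij L in auto)
    have "contains_1423 w" unfolding contains_1423_def ln
      apply (rule exI[of _ "phi k P i"], rule exI[of _ "phi k P j"])
      using pi pj gap[OF ij(2)] jb[of j] ij    m0 m1 m2 by auto
    thus False using assms(1) by (simp add: An_def)
  qed
  have c3: "\<not> contains_4132 \<pi>"
  proof
    assume "contains_4132 \<pi>"
    then obtain i j where ij: "1 \<le> i" "i + 2 \<le> j" "j \<le> m - 1"
      "pe \<pi> (i+1) < pe \<pi> (j+1)" "pe \<pi> (j+1) < pe \<pi> j" "pe \<pi> j < pe \<pi> i" unfolding contains_4132_def lp by blast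
    have pi: "cl k P (phi k P i) = i \<and> cl k P (phi k P i + 1) = i + 1 \<and> 1 \<le> phi k P i \<and> phi k P i + 1 \<le> n" using pair ij by simp
    have pj: "cl k P (phi k P j) = j \<and> cl k P (phi k P j + 1) = j + 1 \<and> 1 \<le> phi k P j \<and> phi k P j + 1 \<le> n" using pair ij by simp
    have m0: "pe w (phi k P i + 1) < pe w (phi k P j + 1)" by (rule mono) (use pi pj ij L in auto)
    have m1: "pe w (phi k P j + 1) < pe w (phi k P j)" by (rule mono) (use pi pj ij L in auto)
    have m2: "pe w (phi k P j) < pe w (phi k P i)" by (rule mono) (use pi pj ij L in auto)
    have "contains_4132 w" unfolding contains_4132_def ln
      apply (rule exI[of _ "phi k P i"], rule exI[of _ "phi k P j"])
      using pi pj gap[OF ij(2)] jb[of j] ij    m0 m1 m2 by auto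
    thus False using assms(1) by (simp add: An_def)
  qed
  have c4: "\<not> contains_2314 \<pi>"
  proof
    assume "contains_2314 \<pi>"
    then obtain i j where ij: "1 \<le> i" "i + 2 \<le> j" "j \<le> m - 1"
      "pe \<pi> j < pe \<pi> i" "pe \<pi> i < pe \<pi> (i+1)" "pe \<pi> (i+1) < pe \<pi> (j+1)" unfolding contains_2314_def lp by blast
    have pi: "cl k P (phi k P i) = i \<and> cl k P (phi k P i + 1) = i + 1 \<and> 1 \<le> phi k P i \<and> phi k P i + 1 \<le> n" using pair ij by simp
    have pj: "cl k P (phi k P j) = j \<and> cl k P (phi k P j + 1) = j + 1 \<and> 1 \<le> phi k P j \<and> phi k P j + 1 \<le> n" using pair ij by simp
    have m0: "pe w (phi k P j) < pe w (phi k P i)" by (rule mono) (use pi pj ij L in auto)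
    have m1: "pe w (phi k P i) < pe w (phi k P i + 1)" by (rule mono) (use pi pj ij L in auto)
    have m2: "pe w (phi k P i + 1) < pe w (phi k P j + 1)" by (rule mono) (use pi pj ij L in auto)
    have "contains_2314 w" unfolding contains_2314_def ln
      apply (rule exI[of _ "phi k P i"], rule exI[of _ "phi k P j"])
      using pi pj gap[OF ij(2)] jb[of j] ij    m0 m1 m2 by auto
    thus False using assms(1) by (simp add: An_def)
  qed
  have c5: "\<not> contains_231 \<pi>"
  proof
    assume "contains_231 \<pi>"
    then obtain i where ij: "1 \<le> i" "i + 1 \<le> m - 1"
      "pe \<pi> m < pe \<pi> i" "pe \<pi> i < pe \<pi> (i+1)" unfolding contains_231_def lp by blast
    have pi: "cl k P (phi k P i) = i \<and> cl k P (phi k P i + 1) = i + 1 \<and> 1 \<le> phi k P i \<and> phi k P i + 1 \<le> n" using pair ij by simp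
    have cn: "cl k P n = m" using cl_last[OF L] m_def by simp
    have b: "phi k P i + 1 \<le> n - 1" using ij L unfolding phi_def m_def by (simp split: if_split; arith)
    have m0: "pe w (n) < pe w (phi k P i)" by (rule mono) (use pi cn ij L in auto)
    have m1: "pe w (phi k P i) < pe w (phi k P i + 1)" by (rule mono) (use pi cn ij L in auto)
    have "contains_231 w" unfolding contains_231_def ln
      apply (rule exI[of _ "phi k P i"])
      using pi cn b ij   L m0 m1 by auto
    thus False using assms(1) by (simp add: An_def)
  qed
  have c6: "\<not> contains_132 \<pi>"
  proof
    assume "contains_132 \<pi>"
    then obtain j where ij: "2 \<le> j" "j \<le> m - 1"
      "pe \<pi> 1 < pe \<pi> (j+1)" "pe \<pi> (j+1) < pe \<pi> j" unfolding contains_132_def lp by blast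
    have pj: "cl k P (phi k P j) = j \<and> cl k P (phi k P j + 1) = j + 1 \<and> 1 \<le> phi k P j \<and> phi k P j + 1 \<le> n" using pair ij by simp
    have c1: "cl k P 1 = 1" using cl_one L by simp
    have b: "2 \<le> phi k P j" using ij L unfolding phi_def by auto
    have m0: "pe w (1) < pe w (phi k P j + 1)" by (rule mono) (use pj c1 ij L in auto)
    have m1: "pe w (phi k P j + 1) < pe w (phi k P j)" by (rule mono) (use pj c1 ij L in auto)
    have "contains_132 w" unfolding contains_132_def ln
      apply (rule exI[of _ "phi k P j"])
      using pj c1 b ij jb[of j]   L m0 m1 by auto
    thus False using assms(1) by (simp add: An_def)
  qed
  show ?thesis using pS c1 c2 c3 c4 c5 c6 unfolding An_def \<pi>_def m_def by simp
qed



lemma sub_An: assumes "w \<in> An n" "LB w k P"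
  shows "sub w k P \<in> An k"
proof -
  have wS: "w \<in> Sn n" using assms by (simp add: An_def)
  have ln: "length w = n" using wS Sn_len by auto
  have L: "1 \<le> k" "1 \<le> P" "P + k - 1 \<le> n" using assms(2) LB_basic ln by auto
  define \<sigma> where "\<sigma> = sub w k P"
  have sS: "\<sigma> \<in> Sn k" using sub_Sn[OF wS assms(2)] unfolding \<sigma>_def .
  have ls: "length \<sigma> = k" using sS Sn_len by auto
  have ps: "\<And>s. 1 \<le> s \<Longrightarrow> s \<le> k \<Longrightarrow> pe \<sigma> s = pe w (s + (P - 1))"
    using pe_sub[OF assms(2)] L unfolding \<sigma>_def by simp
  have inb: "\<And>t. 1 \<le> t \<Longrightarrow> t \<le> n \<Longrightarrow> (pe w t \<le> k \<longleftrightarrow> P \<le> t \<and> t \<le> P + k - 1)"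
    using LB_iff[OF assms(2)] ln by simp
  have c1: "\<not> contains_3241 \<sigma>"
  proof
    assume "contains_3241 \<sigma>"
    then obtain i j where ij: "1 \<le> i" "i + 2 \<le> j" "j \<le> k - 1"
      "pe \<sigma> (j+1) < pe \<sigma> (i+1)" "pe \<sigma> (i+1) < pe \<sigma> i" "pe \<sigma> i < pe \<sigma> j" unfolding contains_3241_def ls by blast
    have "contains_3241 w" unfolding contains_3241_def ln
      apply (rule exI[of _ "i + (P - 1)"], rule exI[of _ "j + (P - 1)"])
      using ij ps[of i] ps[of "i+1"] ps[of j] ps[of "j+1"] L by (auto; arith)
    thus False using assms(1) by (simp add: An_def)
  qed
  have c2: "\<not> contains_1423 \<sigma>"
  proof
    assume "contains_1423 \<sigma>"
    then obtain i j where ij: "1 \<le> i" "i + 2 \<le> j" "j \<le> k - 1"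
      "pe \<sigma> i < pe \<sigma> j" "pe \<sigma> j < pe \<sigma> (j+1)" "pe \<sigma> (j+1) < pe \<sigma> (i+1)" unfolding contains_1423_def ls by blast
    have "contains_1423 w" unfolding contains_1423_def ln
      apply (rule exI[of _ "i + (P - 1)"], rule exI[of _ "j + (P - 1)"])
      using ij ps[of i] ps[of "i+1"] ps[of j] ps[of "j+1"] L by (auto; arith)
    thus False using assms(1) by (simp add: An_def)
  qed
  have c3: "\<not> contains_4132 \<sigma>"
  proof
    assume "contains_4132 \<sigma>"
    then obtain i j where ij: "1 \<le> i" "i + 2 \<le> j" "j \<le> k - 1"
      "pe \<sigma> (i+1) < pe \<sigma> (j+1)" "pe \<sigma> (j+1) < pe \<sigma> j" "pe \<sigma> j < pe \<sigma> i" unfolding contains_4132_def ls by blast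
    have "contains_4132 w" unfolding contains_4132_def ln
      apply (rule exI[of _ "i + (P - 1)"], rule exI[of _ "j + (P - 1)"])
      using ij ps[of i] ps[of "i+1"] ps[of j] ps[of "j+1"] L by (auto; arith)
    thus False using assms(1) by (simp add: An_def)
  qed
  have c4: "\<not> contains_2314 \<sigma>"
  proof
    assume "contains_2314 \<sigma>"
    then obtain i j where ij: "1 \<le> i" "i + 2 \<le> j" "j \<le> k - 1"
      "pe \<sigma> j < pe \<sigma> i" "pe \<sigma> i < pe \<sigma> (i+1)" "pe \<sigma> (i+1) < pe \<sigma> (j+1)" unfolding contains_2314_def ls by blast
    have "contains_2314 w" unfolding contains_2314_def ln
      apply (rule exI[of _ "i + (P - 1)"], rule exI[of _ "j + (P - 1)"])
      using ij ps[of i] ps[of "i+1"] ps[of j] ps[of "j+1"] L by (auto; arith)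
    thus False using assms(1) by (simp add: An_def)
  qed
  have c5: "\<not> contains_231 \<sigma>"
  proof
    assume "contains_231 \<sigma>"
    then obtain i where ij: "1 \<le> i" "i + 1 \<le> k - 1"
      "pe \<sigma> k < pe \<sigma> i" "pe \<sigma> i < pe \<sigma> (i+1)" unfolding contains_231_def ls by blast
    have e1: "pe \<sigma> k = pe w (P + k - 1)" "pe \<sigma> i = pe w (i + (P - 1))" "pe \<sigma> (i+1) = pe w (i + (P - 1) + 1)"
      using ps[of k] ps[of i] ps[of "i+1"] ij L by (auto simp: add.commute)
    show False
    proof (cases "P + k - 1 = n")
      case True
      have "contains_231 w" unfolding contains_231_def ln
        apply (rule exI[of _ "i + (P - 1)"])
        using ij e1 True L by (auto; arith)
      thus False using assms(1) by (simp add: An_def)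
    next
      case False
      have pk: "P + k \<le> n" "P + k - 1 \<le> n - 1" using False L by arith+
      hence big: "k < pe w (P + k - 1 + 1)" using inb[of "P + k - 1 + 1"] False L by (auto; arith)
      have sm: "pe w (i + (P - 1) + 1) \<le> k" using inb[of "i + (P - 1) + 1"] ij L by (auto; arith)
      have "contains_2314 w" unfolding contains_2314_def ln
        apply (rule exI[of _ "i + (P - 1)"], rule exI[of _ "P + k - 1"])
        using ij e1 False L big sm pk by (auto; arith)
      thus False using assms(1) by (simp add: An_def)
    qed
  qed
  have c6: "\<not> contains_132 \<sigma>"
  proof
    assume "contains_132 \<sigma>"
    then obtain j where ij: "2 \<le> j" "j \<le> k - 1"
      "pe \<sigma> 1 < pe \<sigma> (j+1)" "pe \<sigma> (j+1) < pe \<sigma> j" unfolding contains_132_def ls by blast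
    have e1: "pe \<sigma> 1 = pe w P" "pe \<sigma> j = pe w (j + (P - 1))" "pe \<sigma> (j+1) = pe w (j + (P - 1) + 1)"
    proof -
      have jj: "1 \<le> j" "j \<le> k" "1 \<le> j + 1" "j + 1 \<le> k" "1 \<le> k" using ij by arith+
      show "pe \<sigma> 1 = pe w P" using ps[of 1] L by simp
      show "pe \<sigma> j = pe w (j + (P - 1))" using ps[OF jj(1,2)] .
      show "pe \<sigma> (j+1) = pe w (j + (P - 1) + 1)" using ps[OF jj(3,4)] by simp
    qed
    show False
    proof (cases "P = 1")
      case True
      have "contains_132 w" unfolding contains_132_def ln
        apply (rule exI[of _ "j"])
        using ij e1 True L by (auto; arith)
      thus False using assms(1) by (simp add: An_def)
    next
      case False
      have "2 \<le> P" using False L by arith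
      hence "1 \<le> P - 1" "P - 1 \<le> n" "\<not> P \<le> P - 1" using L by arith+
      hence big: "k < pe w (P - 1)" using inb[of "P - 1"] by (auto; arith)
      have sm: "pe w (j + (P - 1)) \<le> k" using inb[of "j + (P - 1)"] ij L by (auto; arith)
      have "contains_4132 w" unfolding contains_4132_def ln
        apply (rule exI[of _ "P - 1"], rule exI[of _ "j + (P - 1)"])
        using ij e1 False L big sm by (auto; arith)
      thus False using assms(1) by (simp add: An_def)
    qed
  qed
  show ?thesis using sS c1 c2 c3 c4 c5 c6 unfolding An_def \<sigma>_def by simp
qed

lemma LB_unique: assumes "LB w k P" "LB w k P'" shows "P = P'"
proof -
  have a: "1 \<le> k" "1 \<le> P" "P + k - 1 \<le> length w" "1 \<le> P'" "P' + k - 1 \<le> length w"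
    using assms LB_basic by auto
  have "pe w P \<le> k" using LB_iff[OF assms(1), of P] a by auto
  hence "P' \<le> P" using LB_iff[OF assms(2), of P] a by auto
  moreover have "pe w P' \<le> k" using LB_iff[OF assms(2), of P'] a by auto
  hence "P \<le> P'" using LB_iff[OF assms(1), of P'] a by auto
  ultimately show ?thesis by simp
qed

lemma LB_not_simple: assumes "w \<in> Sn n" "LB w k P" "2 \<le> k" "k \<le> n - 1"
  shows "\<not> simple w"
proof -
  have ln: "length w = n" using assms Sn_len by auto
  have L: "1 \<le> k" "1 \<le> P" "P + k - 1 \<le> n" using assms(2) LB_basic ln by auto
  have img: "pe w ` {P..P + k - 1} = {1..<1 + (P + k - 1 - P + 1)}"
  proof
    show "pe w ` {P..P + k - 1} \<subseteq> {1..<1 + (P + k - 1 - P + 1)}"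
    proof
      fix v assume "v \<in> pe w ` {P..P + k - 1}"
      then obtain t where t: "P \<le> t" "t \<le> P + k - 1" "v = pe w t" by auto
      have "pe w t \<le> k" using LB_iff[OF assms(2), of t] t L ln by auto
      moreover have "1 \<le> pe w t" using Sn_pos[OF assms(1), of t] t L by auto
      ultimately show "v \<in> {1..<1 + (P + k - 1 - P + 1)}" using t L by auto
    qed
  next
    show "{1..<1 + (P + k - 1 - P + 1)} \<subseteq> pe w ` {P..P + k - 1}"
    proof
      fix v assume v: "v \<in> {1..<1 + (P + k - 1 - P + 1)}"
      hence "1 \<le> v" "v \<le> k" using L by auto
      moreover hence "v \<le> n" using assms by linarith
      ultimately obtain t where t: "1 \<le> t" "t \<le> n" "pe w t = v" using Sn_surj[OF assms(1)] by metis
      hence "P \<le> t \<and> t \<le> P + k - 1" using LB_iff[OF assms(2), of t] \<open>v \<le> k\<close> ln by auto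
      thus "v \<in> pe w ` {P..P + k - 1}" using t by auto
    qed
  qed
  have ex: "\<exists>a. pe w ` {P..P + k - 1} = {a..<a + (P + k - 1 - P + 1)}" using img by blast
  show ?thesis unfolding simple_def not_not ln
    apply (rule exI[of _ P], rule exI[of _ "P + k - 1"])
    using ex L assms(3,4) by auto
qed

lemma LB_lift: assumes "w \<in> Sn n" "LB w k P" "LB (dec w k P) k2 P2"
  shows "LB w (k2 + k - 1) P2"
proof -
  have ln: "length w = n" using assms Sn_len by auto
  have L: "1 \<le> k" "1 \<le> P" "P + k - 1 \<le> n" using assms(2) LB_basic ln by auto
  have ld: "length (dec w k P) = n - k + 1" using length_dec[OF assms(2)] ln by simp
  have L2: "1 \<le> k2" "1 \<le> P2" "P2 + k2 - 1 \<le> n - k + 1" using LB_basic[OF assms(3)] ld by auto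
  have iff2: "\<And>i. 1 \<le> i \<Longrightarrow> i \<le> n - k + 1 \<Longrightarrow> (pe (dec w k P) i \<le> k2 \<longleftrightarrow> P2 \<le> i \<and> i \<le> P2 + k2 - 1)"
    using LB_iff[OF assms(3)] ld by simp
  have clP: "cl k P P = P" unfolding cl_def using L by auto
  have "pe (dec w k P) P = 1" using val_dec(1)[OF assms(1,2), of P] clP LB_iff[OF assms(2), of P] L ln by auto
  hence PP: "P2 \<le> P" "P \<le> P2 + k2 - 1" using iff2[of P] L L2 by auto
  show ?thesis unfolding LB_def ln
  proof (intro conjI allI impI)
    show "1 \<le> k2 + k - 1" "1 \<le> P2" using L L2 by auto
    show "P2 + (k2 + k - 1) - 1 \<le> n" using L L2 by auto
  next
    fix t assume t: "1 \<le> t \<and> t \<le> n"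
    have v: "pe (dec w k P) (cl k P t) = (if pe w t \<le> k then 1 else pe w t - (k - 1))"
      and r: "1 \<le> cl k P t" "cl k P t \<le> n - k + 1" using val_dec[OF assms(1,2)] t by auto
    have e1: "pe w t \<le> k2 + k - 1 \<longleftrightarrow> pe (dec w k P) (cl k P t) \<le> k2" using v L L2 by auto
    have bt: "pe w t \<le> k \<longleftrightarrow> P \<le> t \<and> t \<le> P + k - 1" using LB_iff[OF assms(2), of t] t ln by auto
    have e2: "P2 \<le> cl k P t \<and> cl k P t \<le> P2 + k2 - 1 \<longleftrightarrow> P2 \<le> t \<and> t \<le> P2 + (k2 + k - 1) - 1"
      using PP L L2 unfolding cl_def by auto
    show "pe w t \<le> k2 + k - 1 \<longleftrightarrow> P2 \<le> t \<and> t \<le> P2 + (k2 + k - 1) - 1"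
      using e1 e2 iff2[OF r] by simp
  qed
qed

lemma LB_lower: assumes "w \<in> Sn n" "LB w k P" "LB w k' P'" "k < k'"
  shows "LB (dec w k P) (k' - k + 1) P'"
proof -
  have ln: "length w = n" using assms Sn_len by auto
  have L: "1 \<le> k" "1 \<le> P" "P + k - 1 \<le> n" using assms(2) LB_basic ln by auto
  have L': "1 \<le> k'" "1 \<le> P'" "P' + k' - 1 \<le> n" using assms(3) LB_basic ln by auto
  have ld: "length (dec w k P) = n - k + 1" using length_dec[OF assms(2)] ln by simp
  have "pe w P \<le> k" using LB_iff[OF assms(2), of P] L ln by auto
  hence a1: "P' \<le> P" using LB_iff[OF assms(3), of P] L ln assms(4) by auto
  have "pe w (P + k - 1) \<le> k" using LB_iff[OF assms(2), of "P + k - 1"] L ln by auto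
  hence a2: "P + k - 1 \<le> P' + k' - 1" using LB_iff[OF assms(3), of "P + k - 1"] L ln assms(4) by auto
  show ?thesis unfolding LB_def ld
  proof (intro conjI allI impI)
    show "1 \<le> k' - k + 1" "1 \<le> P'" using L' by auto
    show "P' + (k' - k + 1) - 1 \<le> n - k + 1" using L' assms(4) by auto
  next
    fix i assume i: "1 \<le> i \<and> i \<le> n - k + 1"
    have pr: "1 \<le> phi k P i" "phi k P i \<le> n" using phi_range[OF L(1), of i n P] i L by auto
    have v: "pe (dec w k P) i = (if pe w (phi k P i) \<le> k then 1 else pe w (phi k P i) - (k - 1))"
      using val_dec(1)[OF assms(1,2) pr] cl_phi[OF L(1)] by simp
    have e1: "pe (dec w k P) i \<le> k' - k + 1 \<longleftrightarrow> pe w (phi k P i) \<le> k'" using v L assms(4) by auto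
    have e2: "pe w (phi k P i) \<le> k' \<longleftrightarrow> P' \<le> phi k P i \<and> phi k P i \<le> P' + k' - 1"
      using LB_iff[OF assms(3)] pr ln by auto
    have e3: "P' \<le> phi k P i \<and> phi k P i \<le> P' + k' - 1 \<longleftrightarrow> P' \<le> i \<and> i \<le> P' + (k' - k + 1) - 1"
      using a1 a2 L L' assms(4) unfolding phi_def by auto
    show "pe (dec w k P) i \<le> k' - k + 1 \<longleftrightarrow> P' \<le> i \<and> i \<le> P' + (k' - k + 1) - 1"
      using e1 e2 e3 by simp
  qed
qed



lemma prop_fwd: fixes t t' lo hi :: nat assumes "\<And>t. lo \<le> t \<Longrightarrow> t + 1 \<le> hi \<Longrightarrow> Q t \<Longrightarrow> Q (t + 1)"
  "lo \<le> t" "t \<le> t'" "t' \<le> hi" "Q t" shows "Q t'"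
  using assms(3,4)
proof (induction t' rule: dec_induct)
  case base show ?case using assms(5) by simp
next
  case (step m) thus ?case using assms(1)[of m] assms(2) by simp
qed

lemma prop_bwd: fixes t t' lo hi :: nat assumes "\<And>t. lo \<le> t \<Longrightarrow> t + 1 \<le> hi \<Longrightarrow> Q (t + 1) \<Longrightarrow> Q t"
  "lo \<le> t" "t \<le> t'" "t' \<le> hi" "Q t'" shows "Q t"
proof (rule ccontr)
  assume "\<not> Q t"
  have "\<not> Q t'" using prop_fwd[of lo hi "\<lambda>x. \<not> Q x" t t'] assms \<open>\<not> Q t\<close> by blast
  thus False using assms(5) by simp
qed

lemma card_low: assumes "w \<in> Sn n" "v \<le> n" shows "card {t \<in> {1..n}. pe w t \<le> v} = v"
proof -
  define Z where "Z = {t \<in> {1..n}. pe w t \<le> v}"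
  have inj: "inj_on (pe w) Z" unfolding Z_def inj_on_def using Sn_inj[OF assms(1)] by auto
  have img: "pe w ` Z = {1..v}"
  proof
    show "pe w ` Z \<subseteq> {1..v}" unfolding Z_def using Sn_pos[OF assms(1)] by auto
    show "{1..v} \<subseteq> pe w ` Z"
    proof
      fix x assume x: "x \<in> {1..v}"
      then obtain t where "1 \<le> t" "t \<le> n" "pe w t = x" using Sn_surj[OF assms(1), of x] assms(2) by auto
      thus "x \<in> pe w ` Z" unfolding Z_def using x by force
    qed
  qed
  have "card (pe w ` Z) = card Z" using card_image[OF inj] .
  thus ?thesis using img unfolding Z_def by simp
qed

lemma LB_intro: assumes "w \<in> Sn n" "1 \<le> k" "k \<le> n" "1 \<le> P" "P \<le> Q" "Q \<le> n"
  "\<And>t. 1 \<le> t \<Longrightarrow> t \<le> n \<Longrightarrow> (pe w t \<le> k \<longleftrightarrow> P \<le> t \<and> t \<le> Q)"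
  shows "LB w k P"
proof -
  have ln: "length w = n" using assms Sn_len by auto
  have "{t \<in> {1..n}. pe w t \<le> k} = {P..Q}" using assms(4,5,6,7) by auto
  hence "card {P..Q} = k" using card_low[OF assms(1,3)] by simp
  hence "Q = P + k - 1" using assms by simp
  thus ?thesis unfolding LB_def ln using assms by auto
qed



lemma exists_LB: assumes "w \<in> An n" "\<not> simple w"
  shows "\<exists>k P. 2 \<le> k \<and> k \<le> n - 1 \<and> LB w k P"
proof -
  have wS: "w \<in> Sn n" using assms by (simp add: An_def)
  have ln: "length w = n" using wS Sn_len by auto
  have n1: "\<not> contains_3241 w" "\<not> contains_1423 w" "\<not> contains_4132 w" "\<not> contains_2314 w"
    "\<not> contains_231 w" "\<not> contains_132 w" using assms(1) by (auto simp: An_def)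
  obtain p q a where pq: "1 \<le> p" "p \<le> q" "q \<le> n" "2 \<le> q - p + 1" "q - p + 1 \<le> n - 1"
    and img: "pe w ` {p..q} = {a..<a + (q - p + 1)}"
    using assms(2) unfolding simple_def ln by blast
  define c where "c = a + (q - p + 1)"
  have pq2: "p + 1 \<le> q" "3 \<le> n" using pq by arith+
  have inB: "\<And>t. p \<le> t \<Longrightarrow> t \<le> q \<Longrightarrow> a \<le> pe w t \<and> pe w t < c"
  proof -
    fix t assume "p \<le> t" "t \<le> q"
    hence "pe w t \<in> pe w ` {p..q}" by simp
    thus "a \<le> pe w t \<and> pe w t < c" using img c_def by simp
  qed
  have outB: "\<And>t. 1 \<le> t \<Longrightarrow> t \<le> n \<Longrightarrow> t < p \<or> q < t \<Longrightarrow> pe w t < a \<or> c \<le> pe w t"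
  proof (rule ccontr)
    fix t assume t: "1 \<le> t" "t \<le> n" "t < p \<or> q < t" and nn: "\<not> (pe w t < a \<or> c \<le> pe w t)"
    hence "pe w t \<in> pe w ` {p..q}" using img c_def by simp
    then obtain t' where t': "p \<le> t'" "t' \<le> q" "pe w t' = pe w t" by auto
    hence "t' = t" using Sn_inj[OF wS, of t' t] t pq by simp
    thus False using t t' by simp
  qed
  have "a \<in> pe w ` {p..q}" using img by simp
  then obtain ta where ta: "p \<le> ta" "ta \<le> q" "pe w ta = a" by auto
  have a1: "1 \<le> a" "a \<le> n" using Sn_pos[OF wS, of ta] Sn_le[OF wS, of ta] ta pq by auto
  show ?thesis
  proof (cases "a = 1")
    case True
    have "LB w (q - p + 1) p"
    proof (rule LB_intro[OF wS, where Q = q])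
      show "1 \<le> q - p + 1" "q - p + 1 \<le> n" "1 \<le> p" "p \<le> q" "q \<le> n" using pq by auto
    next
      fix t assume t: "1 \<le> t" "t \<le> n"
      show "pe w t \<le> q - p + 1 \<longleftrightarrow> p \<le> t \<and> t \<le> q"
      proof
        assume h: "pe w t \<le> q - p + 1"
        show "p \<le> t \<and> t \<le> q"
        proof (rule ccontr)
          assume "\<not> (p \<le> t \<and> t \<le> q)"
          hence "pe w t < a \<or> c \<le> pe w t" using outB[of t] t by auto
          thus False using h True c_def Sn_pos[OF wS t] by auto
        qed
      next
        assume "p \<le> t \<and> t \<le> q"
        thus "pe w t \<le> q - p + 1" using inB True c_def by fastforce
      qed
    qed
    thus ?thesis using pq by blast
  next
    case False
    hence a2: "2 \<le> a" using a1 by simp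
    obtain r where r: "1 \<le> r" "r \<le> n" "pe w r = 1" using Sn_surj[OF wS, of 1] pq2 by auto
    have rout: "r < p \<or> q < r"
    proof (rule ccontr)
      assume "\<not> (r < p \<or> q < r)"
      hence "a \<le> pe w r" using inB by auto
      thus False using r a2 by simp
    qed
    define ASC where "ASC \<longleftrightarrow> (\<exists>j. p \<le> j \<and> j + 1 \<le> q \<and> pe w j < pe w (j+1))"
    define DESC where "DESC \<longleftrightarrow> (\<exists>j. p \<le> j \<and> j + 1 \<le> q \<and> pe w (j+1) < pe w j)"
    have F1: "\<And>i. ASC \<Longrightarrow> 1 \<le> i \<Longrightarrow> i + 1 \<le> n \<Longrightarrow> i + 1 < p \<or> q < i \<Longrightarrow> pe w i < a \<Longrightarrow> c \<le> pe w (i+1) \<Longrightarrow> False"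
    proof -
      fix i assume A: ASC and i: "1 \<le> i" "i + 1 \<le> n" "i + 1 < p \<or> q < i" "pe w i < a" "c \<le> pe w (i+1)"
      then obtain j where j: "p \<le> j" "j + 1 \<le> q" "pe w j < pe w (j+1)" unfolding ASC_def by blast
      have b: "a \<le> pe w j" "pe w (j+1) < c" using inB[of j] inB[of "j+1"] j by auto
      show False
      proof (cases "i + 1 < p")
        case True
        have "contains_1423 w" unfolding contains_1423_def ln
          apply (rule exI[of _ i], rule exI[of _ j])
          using i j b True pq by (auto; arith)
        thus False using n1 by simp
      next
        case False
        hence "q < i" using i by simp
        have "contains_2314 w" unfolding contains_2314_def ln
          apply (rule exI[of _ j], rule exI[of _ i])
          using i j b \<open>q < i\<close> pq by (auto; arith)
        thus False using n1 by simp
      qed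
    qed
    have F2: "\<And>i. DESC \<Longrightarrow> 1 \<le> i \<Longrightarrow> i + 1 \<le> n \<Longrightarrow> i + 1 < p \<or> q < i \<Longrightarrow> c \<le> pe w i \<Longrightarrow> pe w (i+1) < a \<Longrightarrow> False"
    proof -
      fix i assume D: DESC and i: "1 \<le> i" "i + 1 \<le> n" "i + 1 < p \<or> q < i" "c \<le> pe w i" "pe w (i+1) < a"
      then obtain j where j: "p \<le> j" "j + 1 \<le> q" "pe w (j+1) < pe w j" unfolding DESC_def by blast
      have b: "a \<le> pe w (j+1)" "pe w j < c" using inB[of j] inB[of "j+1"] j by auto
      show False
      proof (cases "i + 1 < p")
        case True
        have "contains_4132 w" unfolding contains_4132_def ln
          apply (rule exI[of _ i], rule exI[of _ j])
          using i j b True pq by (auto; arith)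
        thus False using n1 by simp
      next
        case False
        hence "q < i" using i by simp
        have "contains_3241 w" unfolding contains_3241_def ln
          apply (rule exI[of _ j], rule exI[of _ i])
          using i j b \<open>q < i\<close> pq by (auto; arith)
        thus False using n1 by simp
      qed
    qed
    have F3: "ASC \<Longrightarrow> q < n \<Longrightarrow> pe w n < a \<Longrightarrow> False"
    proof -
      assume A: ASC and qn: "q < n" and s: "pe w n < a"
      then obtain j where j: "p \<le> j" "j + 1 \<le> q" "pe w j < pe w (j+1)" unfolding ASC_def by blast
      have b: "a \<le> pe w j" using inB[of j] j by auto
      have "contains_231 w" unfolding contains_231_def ln
        apply (rule exI[of _ j])
        using j b s qn pq by (auto; arith)
      thus False using n1 by simp
    qed
    have F4: "DESC \<Longrightarrow> 2 \<le> p \<Longrightarrow> pe w 1 < a \<Longrightarrow> False"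
    proof -
      assume D: DESC and p2: "2 \<le> p" and s: "pe w 1 < a"
      then obtain j where j: "p \<le> j" "j + 1 \<le> q" "pe w (j+1) < pe w j" unfolding DESC_def by blast
      have b: "a \<le> pe w (j+1)" using inB[of "j+1"] j by auto
      have "contains_132 w" unfolding contains_132_def ln
        apply (rule exI[of _ j])
        using j b s p2 pq by (auto; arith)
      thus False using n1 by simp
    qed
    have ne: "\<And>j. p \<le> j \<Longrightarrow> j + 1 \<le> q \<Longrightarrow> pe w j \<noteq> pe w (j+1)"
    proof
      fix j assume j: "p \<le> j" "j + 1 \<le> q" and e: "pe w j = pe w (j+1)"
      hence "j = j + 1" using Sn_inj[OF wS, of j "j+1"] pq by simp
      thus False by simp
    qed
    have AD: "ASC \<or> DESC" using ne[of p] pq2 unfolding ASC_def DESC_def by (meson le_refl linorder_neqE_nat)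
    have incr: "\<And>j. \<not> DESC \<Longrightarrow> p \<le> j \<Longrightarrow> j + 1 \<le> q \<Longrightarrow> pe w j < pe w (j+1)"
      using ne unfolding DESC_def by (meson linorder_neqE_nat)
    have decr: "\<And>j. \<not> ASC \<Longrightarrow> p \<le> j \<Longrightarrow> j + 1 \<le> q \<Longrightarrow> pe w (j+1) < pe w j"
      using ne unfolding ASC_def by (meson linorder_neqE_nat)
    show ?thesis
    proof (cases "r < p")
      case True
      have p2: "2 \<le> p" using True r by simp
      have pm: "1 \<le> p - 1" "p - 1 \<le> n" "p - 1 < p" using p2 pq by arith+
      have nD: "\<not> DESC"
      proof
        assume D: DESC
        have T1: "c \<le> pe w 1" using F4[OF D p2] outB[of 1] p2 pq2 by force
        have Tprop: "\<And>t. 1 \<le> t \<Longrightarrow> t + 1 \<le> p - 1 \<Longrightarrow> c \<le> pe w t \<Longrightarrow> c \<le> pe w (t+1)"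
        proof (rule ccontr)
          fix t assume t: "1 \<le> t" "t + 1 \<le> p - 1" "c \<le> pe w t" "\<not> c \<le> pe w (t+1)"
          hence "pe w (t+1) < a" using outB[of "t+1"] pq by (auto; arith)
          thus False using F2[OF D, of t] t pq by (auto; arith)
        qed
        have "c \<le> pe w r" using prop_fwd[of 1 "p - 1" "\<lambda>t. c \<le> pe w t" 1 r] Tprop T1 True r by auto
        thus False using r a2 c_def by simp
      qed
      have A: ASC using AD nD by simp
      have Sprop: "\<And>t. 1 \<le> t \<Longrightarrow> t + 1 \<le> n \<Longrightarrow> t + 1 < p \<or> q < t \<Longrightarrow> pe w t < a \<Longrightarrow> pe w (t+1) < a"
      proof (rule ccontr)
        fix t assume t: "1 \<le> t" "t + 1 \<le> n" "t + 1 < p \<or> q < t" "pe w t < a" "\<not> pe w (t+1) < a"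
        hence "c \<le> pe w (t+1)" using outB[of "t+1"] by (auto; arith)
        thus False using F1[OF A, of t] t by auto
      qed
      have noSR: "\<And>t. q < t \<Longrightarrow> t \<le> n \<Longrightarrow> \<not> pe w t < a"
      proof
        fix t assume t: "q < t" "t \<le> n" "pe w t < a"
        have "pe w n < a" using prop_fwd[of "q + 1" n "\<lambda>t. pe w t < a" t n] Sprop t pq by (auto; arith)
        thus False using F3[OF A] t by simp
      qed
      have stepL: "\<And>t. 1 \<le> t \<Longrightarrow> t + 1 \<le> p - 1 \<Longrightarrow> pe w t < a \<Longrightarrow> pe w (t+1) < a"
      proof -
        fix t assume t: "1 \<le> t" "t + 1 \<le> p - 1" "pe w t < a"
        have "t + 1 \<le> n" "t + 1 < p" using t pq by arith+
        thus "pe w (t+1) < a" using Sprop[of t] t by auto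
      qed
      have rp1: "r \<le> p - 1" using True by simp
      have Sp: "pe w (p - 1) < a" using prop_fwd[of 1 "p - 1" "\<lambda>t. pe w t < a" r "p - 1", OF stepL r(1) rp1 order.refl] r a2
        by simp
      have Sloc: "\<And>t. 1 \<le> t \<Longrightarrow> t \<le> n \<Longrightarrow> pe w t < a \<Longrightarrow> t \<le> p - 1"
      proof (rule ccontr)
        fix t assume t: "1 \<le> t" "t \<le> n" "pe w t < a" "\<not> t \<le> p - 1"
        have "p \<le> t" using t pq by arith
        show False
        proof (cases "t \<le> q")
          case True thus False using inB[of t] t \<open>p \<le> t\<close> by auto
        next
          case False thus False using noSR[of t] t by auto
        qed
      qed
      show ?thesis
      proof (cases "a = 2")
        case True
        have "pe w (p - 1) = 1" using Sp True Sn_pos[OF wS pm(1,2)] by auto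
        hence rp: "r = p - 1" using Sn_inj[OF wS, of r "p - 1"] r pm by auto
        have minp: "\<And>t. p \<le> t \<Longrightarrow> t \<le> q \<Longrightarrow> pe w p \<le> pe w t"
        proof -
          fix t assume t: "p \<le> t" "t \<le> q"
          show "pe w p \<le> pe w t"
            using prop_fwd[of p q "\<lambda>t. pe w p \<le> pe w t" p t] incr[OF nD] t by force
        qed
        have pa: "pe w p = 2" using minp[OF ta(1,2)] ta inB[of p] pq True by force
        have "LB w 2 (p - 1)"
        proof (rule LB_intro[OF wS, where Q = p])
          show "1 \<le> (2::nat)" "2 \<le> n" "1 \<le> p - 1" "p - 1 \<le> p" "p \<le> n" using pq pq2 p2 by auto
        next
          fix t assume t: "1 \<le> t" "t \<le> n"
          show "pe w t \<le> 2 \<longleftrightarrow> p - 1 \<le> t \<and> t \<le> p"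
          proof
            assume h: "pe w t \<le> 2"
            have "pe w t = 1 \<or> pe w t = 2" using h Sn_pos[OF wS t] by auto
            thus "p - 1 \<le> t \<and> t \<le> p"
            proof
              assume "pe w t = 1" thus ?thesis using Sn_inj[OF wS, of t r] t r rp by auto
            next
              assume "pe w t = 2" thus ?thesis using Sn_inj[OF wS, of t p] t pa pq by auto
            qed
          next
            assume "p - 1 \<le> t \<and> t \<le> p"
            hence "t = p - 1 \<or> t = p" by auto
            thus "pe w t \<le> 2" using pa \<open>pe w (p - 1) = 1\<close> by auto
          qed
        qed
        moreover have "(2::nat) \<le> n - 1" "(2::nat) \<le> 2" using pq2 by arith+
        ultimately show ?thesis by blast
      next
        case False
        hence a3: "3 \<le> a" using a2 by simp
        define Z where "Z = {t. 1 \<le> t \<and> t \<le> n \<and> pe w t < a}"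
        have fin: "finite Z" unfolding Z_def by (rule finite_subset[of _ "{1..n}"]) auto
        have rZ: "r \<in> Z" unfolding Z_def using r a2 by simp
        define s0 where "s0 = Min Z"
        have s0Z: "s0 \<in> Z" unfolding s0_def using fin rZ Min_in by blast
        have s0min: "\<And>t. t \<in> Z \<Longrightarrow> s0 \<le> t" unfolding s0_def using fin by simp
        have s0p: "1 \<le> s0" "s0 \<le> p - 1" "pe w s0 < a" using s0Z Sloc unfolding Z_def by auto
        have "LB w (a - 1) s0"
        proof (rule LB_intro[OF wS, where Q = "p - 1"])
          show "1 \<le> a - 1" "a - 1 \<le> n" "1 \<le> s0" "s0 \<le> p - 1" "p - 1 \<le> n" using a2 a1 s0p pq by auto
        next
          fix t assume t: "1 \<le> t" "t \<le> n"
          show "pe w t \<le> a - 1 \<longleftrightarrow> s0 \<le> t \<and> t \<le> p - 1"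
          proof
            assume "pe w t \<le> a - 1"
            hence "t \<in> Z" unfolding Z_def using t a2 by auto
            thus "s0 \<le> t \<and> t \<le> p - 1" using s0min Sloc unfolding Z_def by auto
          next
            assume h: "s0 \<le> t \<and> t \<le> p - 1"
            have "pe w t < a" using prop_fwd[of 1 "p - 1" "\<lambda>t. pe w t < a" s0 t, OF stepL] s0p h by auto
            thus "pe w t \<le> a - 1" by simp
          qed
        qed
        moreover have "2 \<le> a - 1" "a - 1 \<le> n - 1" using a3 a1 by arith+
        ultimately show ?thesis by blast
      qed
    next
      case False
      hence rq: "q < r" using rout by simp
      have qn: "q < n" using rq r by simp
      have nA: "\<not> ASC"
      proof
        assume A: ASC
        have Sprop: "\<And>t. q + 1 \<le> t \<Longrightarrow> t + 1 \<le> n \<Longrightarrow> pe w t < a \<Longrightarrow> pe w (t+1) < a"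
        proof (rule ccontr)
          fix t assume t: "q + 1 \<le> t" "t + 1 \<le> n" "pe w t < a" "\<not> pe w (t+1) < a"
          hence "c \<le> pe w (t+1)" using outB[of "t+1"] by (auto; arith)
          thus False using F1[OF A, of t] t by auto
        qed
        have "pe w n < a" using prop_fwd[of "q + 1" n "\<lambda>t. pe w t < a" r n] Sprop r rq a2 by auto
        thus False using F3[OF A qn] by simp
      qed
      have D: DESC using AD nA by simp
      have Tprop: "\<And>t. 1 \<le> t \<Longrightarrow> t + 1 \<le> n \<Longrightarrow> t + 1 < p \<or> q < t \<Longrightarrow> c \<le> pe w t \<Longrightarrow> c \<le> pe w (t+1)"
      proof (rule ccontr)
        fix t assume t: "1 \<le> t" "t + 1 \<le> n" "t + 1 < p \<or> q < t" "c \<le> pe w t" "\<not> c \<le> pe w (t+1)"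
        hence "pe w (t+1) < a" using outB[of "t+1"] by (auto; arith)
        thus False using F2[OF D, of t] t by auto
      qed
      have noSL: "\<And>t. 1 \<le> t \<Longrightarrow> t < p \<Longrightarrow> \<not> pe w t < a"
      proof
        fix t assume t: "1 \<le> t" "t < p" "pe w t < a"
        have p2: "2 \<le> p" using t by simp
        have T1: "c \<le> pe w 1" using F4[OF D p2] outB[of 1] p2 pq2 by force
        have stepT: "\<And>t. 1 \<le> t \<Longrightarrow> t + 1 \<le> p - 1 \<Longrightarrow> c \<le> pe w t \<Longrightarrow> c \<le> pe w (t+1)"
        proof -
          fix t assume t: "1 \<le> t" "t + 1 \<le> p - 1" "c \<le> pe w t"
          have "t + 1 \<le> n" "t + 1 < p" using t pq by arith+
          thus "c \<le> pe w (t+1)" using Tprop[of t] t by auto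
        qed
        have tp1: "t \<le> p - 1" using t by simp
        have "c \<le> pe w t" using prop_fwd[of 1 "p - 1" "\<lambda>t. c \<le> pe w t" 1 t, OF stepT order.refl t(1) tp1 T1] .
        thus False using t c_def by simp
      qed
      have Sq: "pe w (q + 1) < a"
      proof (rule ccontr)
        assume "\<not> pe w (q + 1) < a"
        hence "c \<le> pe w (q + 1)" using outB[of "q+1"] qn by auto
        hence "c \<le> pe w r" using prop_fwd[of "q + 1" n "\<lambda>t. c \<le> pe w t" "q + 1" r] Tprop rq r by auto
        thus False using r a2 c_def by simp
      qed
      have Sloc: "\<And>t. 1 \<le> t \<Longrightarrow> t \<le> n \<Longrightarrow> pe w t < a \<Longrightarrow> q + 1 \<le> t"
      proof (rule ccontr)
        fix t assume t: "1 \<le> t" "t \<le> n" "pe w t < a" "\<not> q + 1 \<le> t"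
        show False
        proof (cases "p \<le> t")
          case True thus False using inB[of t] t by auto
        next
          case False thus False using noSL[of t] t by auto
        qed
      qed
      have Sback: "\<And>t. q + 1 \<le> t \<Longrightarrow> t + 1 \<le> n \<Longrightarrow> pe w (t+1) < a \<Longrightarrow> pe w t < a"
      proof (rule ccontr)
        fix t assume t: "q + 1 \<le> t" "t + 1 \<le> n" "pe w (t+1) < a" "\<not> pe w t < a"
        hence "c \<le> pe w t" using outB[of t] by (auto; arith)
        hence "c \<le> pe w (t+1)" using Tprop[of t] t by auto
        thus False using t c_def by simp
      qed
      show ?thesis
      proof (cases "a = 2")
        case True
        have "pe w (q + 1) = 1" using Sq True Sn_pos[OF wS, of "q + 1"] qn by auto
        hence rq1: "r = q + 1" using Sn_inj[OF wS, of r "q + 1"] r qn by auto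
        have maxq: "\<And>t. p \<le> t \<Longrightarrow> t \<le> q \<Longrightarrow> pe w q \<le> pe w t"
        proof -
          fix t assume t: "p \<le> t" "t \<le> q"
          show "pe w q \<le> pe w t"
            using prop_bwd[of p q "\<lambda>t. pe w q \<le> pe w t" t q] decr[OF nA] t by force
        qed
        have qa: "pe w q = 2" using maxq[OF ta(1,2)] ta inB[of q] pq True by force
        have "LB w 2 q"
        proof (rule LB_intro[OF wS, where Q = "q + 1"])
          show "1 \<le> (2::nat)" "2 \<le> n" "1 \<le> q" "q \<le> q + 1" "q + 1 \<le> n" using pq pq2 qn by auto
        next
          fix t assume t: "1 \<le> t" "t \<le> n"
          show "pe w t \<le> 2 \<longleftrightarrow> q \<le> t \<and> t \<le> q + 1"
          proof
            assume h: "pe w t \<le> 2"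
            have "pe w t = 1 \<or> pe w t = 2" using h Sn_pos[OF wS t] by auto
            thus "q \<le> t \<and> t \<le> q + 1"
            proof
              assume "pe w t = 1" thus ?thesis using Sn_inj[OF wS, of t r] t r rq1 by auto
            next
              assume "pe w t = 2" thus ?thesis using Sn_inj[OF wS, of t q] t qa pq by auto
            qed
          next
            assume "q \<le> t \<and> t \<le> q + 1"
            hence "t = q \<or> t = q + 1" by auto
            thus "pe w t \<le> 2" using qa \<open>pe w (q + 1) = 1\<close> by auto
          qed
        qed
        moreover have "(2::nat) \<le> n - 1" "(2::nat) \<le> 2" using pq2 by arith+
        ultimately show ?thesis by blast
      next
        case False
        hence a3: "3 \<le> a" using a2 by simp
        define Z where "Z = {t. 1 \<le> t \<and> t \<le> n \<and> pe w t < a}"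
        have fin: "finite Z" unfolding Z_def by (rule finite_subset[of _ "{1..n}"]) auto
        have rZ: "r \<in> Z" unfolding Z_def using r a2 by simp
        define s1 where "s1 = Max Z"
        have s1Z: "s1 \<in> Z" unfolding s1_def using fin rZ Max_in by blast
        have s1max: "\<And>t. t \<in> Z \<Longrightarrow> t \<le> s1" unfolding s1_def using fin by simp
        have s1p: "q + 1 \<le> s1" "s1 \<le> n" "pe w s1 < a" using s1Z Sloc unfolding Z_def by auto
        have "LB w (a - 1) (q + 1)"
        proof (rule LB_intro[OF wS, where Q = s1])
          show "1 \<le> a - 1" "a - 1 \<le> n" "1 \<le> q + 1" "q + 1 \<le> s1" "s1 \<le> n" using a2 a1 s1p by auto
        next
          fix t assume t: "1 \<le> t" "t \<le> n"
          show "pe w t \<le> a - 1 \<longleftrightarrow> q + 1 \<le> t \<and> t \<le> s1"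
          proof
            assume "pe w t \<le> a - 1"
            hence "t \<in> Z" unfolding Z_def using t a2 by auto
            thus "q + 1 \<le> t \<and> t \<le> s1" using s1max Sloc unfolding Z_def by auto
          next
            assume h: "q + 1 \<le> t \<and> t \<le> s1"
            have "pe w t < a" using prop_bwd[of "q + 1" s1 "\<lambda>t. pe w t < a" t s1] Sback s1p h by (auto; arith)
            thus "pe w t \<le> a - 1" by simp
          qed
        qed
        moreover have "2 \<le> a - 1" "a - 1 \<le> n - 1" using a3 a1 by arith+
        ultimately show ?thesis by blast
      qed
    qed
  qed
qed



lemma wit_dec: assumes "\<tau> \<in> An n" "2 \<le> m" "m \<le> n - 1" "\<pi> \<in> An m" "\<sigma> \<in> An (n - m + 1)" "\<tau> = inflate \<pi> \<sigma>"
  shows "\<exists>P. LB \<tau> (n - m + 1) P \<and> \<pi> = dec \<tau> (n - m + 1) P"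
proof -
  have "\<pi> \<in> Sn m" "\<sigma> \<in> Sn (n - m + 1)" using assms by (auto simp: An_def)
  from inflate_LB[OF this] assms(2) obtain P where
    "LB (inflate \<pi> \<sigma>) (n - m + 1) P" "\<pi> = dec (inflate \<pi> \<sigma>) (n - m + 1) P" by auto
  thus ?thesis using assms(6) by auto
qed

theorem mainTheorem14:
  fixes n :: nat and \<tau> :: "nat list"
  assumes "\<tau> \<in> An n" and "\<not> simple \<tau>"
  shows "\<exists>!\<pi>. \<exists>m \<sigma>. 2 \<le> m \<and> m \<le> n - 1 \<and> \<pi> \<in> An m \<and> simple \<pi> \<and>
            \<sigma> \<in> An (n - m + 1) \<and> \<tau> = inflate \<pi> \<sigma>"
proof -
  have wS: "\<tau> \<in> Sn n" using assms by (simp add: An_def)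
  define KS where "KS = {k. 2 \<le> k \<and> k \<le> n - 1 \<and> (\<exists>P. LB \<tau> k P)}"
  have fin: "finite KS" unfolding KS_def by (rule finite_subset[of _ "{..n}"]) auto
  have ne: "KS \<noteq> {}" using exists_LB[OF assms] unfolding KS_def by blast
  define K where "K = Max KS"
  have KK: "K \<in> KS" unfolding K_def using fin ne Max_in by blast
  have Kmax: "\<And>k. k \<in> KS \<Longrightarrow> k \<le> K" unfolding K_def using fin by simp
  obtain P where P: "LB \<tau> K P" and K: "2 \<le> K" "K \<le> n - 1" using KK unfolding KS_def by blast
  define m where "m = n - K + 1"
  have m: "2 \<le> m" "m \<le> n - 1" "n - m + 1 = K" using K unfolding m_def by arith+
  have piA: "dec \<tau> K P \<in> An m" using dec_An[OF assms(1) P] unfolding m_def .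
  have sA: "sub \<tau> K P \<in> An (n - m + 1)" using sub_An[OF assms(1) P] m(3) by simp
  have eq: "\<tau> = inflate (dec \<tau> K P) (sub \<tau> K P)" using inflate_dec[OF P] by simp
  have simp1: "simple (dec \<tau> K P)"
  proof (rule ccontr)
    assume ns: "\<not> simple (dec \<tau> K P)"
    obtain k2 P2 where k2: "2 \<le> k2" "k2 \<le> m - 1" "LB (dec \<tau> K P) k2 P2" using exists_LB[OF piA ns] by blast
    have "LB \<tau> (k2 + K - 1) P2" using LB_lift[OF wS P k2(3)] .
    moreover have "2 \<le> k2 + K - 1" "k2 + K - 1 \<le> n - 1" using k2 K m unfolding m_def by arith+
    ultimately have "k2 + K - 1 \<in> KS" unfolding KS_def by blast
    hence "k2 + K - 1 \<le> K" using Kmax by simp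
    thus False using k2 by arith
  qed
  have ex: "\<exists>m \<sigma>. 2 \<le> m \<and> m \<le> n - 1 \<and> dec \<tau> K P \<in> An m \<and> simple (dec \<tau> K P) \<and>
            \<sigma> \<in> An (n - m + 1) \<and> \<tau> = inflate (dec \<tau> K P) \<sigma>"
    using m piA simp1 sA eq by blast
  have un: "\<pi>1 = \<pi>2" if h1: "\<exists>m \<sigma>. 2 \<le> m \<and> m \<le> n - 1 \<and> \<pi>1 \<in> An m \<and> simple \<pi>1 \<and>
            \<sigma> \<in> An (n - m + 1) \<and> \<tau> = inflate \<pi>1 \<sigma>"
     and h2: "\<exists>m \<sigma>. 2 \<le> m \<and> m \<le> n - 1 \<and> \<pi>2 \<in> An m \<and> simple \<pi>2 \<and>
            \<sigma> \<in> An (n - m + 1) \<and> \<tau> = inflate \<pi>2 \<sigma>" for \<pi>1 \<pi>2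
  proof -
    obtain m1 \<sigma>1 where a1: "2 \<le> m1" "m1 \<le> n - 1" "\<pi>1 \<in> An m1" "simple \<pi>1" "\<sigma>1 \<in> An (n - m1 + 1)" "\<tau> = inflate \<pi>1 \<sigma>1"
      using h1 by blast
    obtain m2 \<sigma>2 where a2: "2 \<le> m2" "m2 \<le> n - 1" "\<pi>2 \<in> An m2" "simple \<pi>2" "\<sigma>2 \<in> An (n - m2 + 1)" "\<tau> = inflate \<pi>2 \<sigma>2"
      using h2 by blast
    obtain P1 where p1: "LB \<tau> (n - m1 + 1) P1" "\<pi>1 = dec \<tau> (n - m1 + 1) P1"
      using wit_dec[OF assms(1) a1(1,2,3,5,6)] by blast
    obtain P2 where p2: "LB \<tau> (n - m2 + 1) P2" "\<pi>2 = dec \<tau> (n - m2 + 1) P2"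
      using wit_dec[OF assms(1) a2(1,2,3,5,6)] by blast
    define k1 where "k1 = n - m1 + 1"
    define k2 where "k2 = n - m2 + 1"
    have S1: "\<pi>1 \<in> Sn m1" "\<pi>2 \<in> Sn m2" using a1(3) a2(3) by (auto simp: An_def)
    have kk: "k1 = k2"
    proof (rule ccontr)
      assume "k1 \<noteq> k2"
      hence "k1 < k2 \<or> k2 < k1" by arith
      thus False
      proof
        assume lt: "k1 < k2"
        have "LB \<pi>1 (k2 - k1 + 1) P2" using LB_lower[OF wS p1(1) p2(1)] lt p1(2) unfolding k1_def k2_def by simp
        moreover have "2 \<le> k2 - k1 + 1" "k2 - k1 + 1 \<le> m1 - 1" using lt a1 a2 unfolding k1_def k2_def by arith+
        ultimately have "\<not> simple \<pi>1" using LB_not_simple[OF S1(1)] by blast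
        thus False using a1(4) by simp
      next
        assume lt: "k2 < k1"
        have "LB \<pi>2 (k1 - k2 + 1) P1" using LB_lower[OF wS p2(1) p1(1)] lt p2(2) unfolding k1_def k2_def by simp
        moreover have "2 \<le> k1 - k2 + 1" "k1 - k2 + 1 \<le> m2 - 1" using lt a1 a2 unfolding k1_def k2_def by arith+
        ultimately have "\<not> simple \<pi>2" using LB_not_simple[OF S1(2)] by blast
        thus False using a2(4) by simp
      qed
    qed
    have "P1 = P2" using LB_unique p1(1) p2(1) kk unfolding k1_def k2_def by metis
    thus ?thesis using p1(2) p2(2) kk unfolding k1_def k2_def by simp
  qed
  show ?thesis using ex un by blast
qed


end
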